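(* Under the standing assumptions (A) below, if $(t_1,t_2)\subseteq\Omega$, then the restriction of $\tau$ to $(t_1,t_2)$ follows a great circle in $S^{n-1}$ through $\lambda$ with constant speed $k$. Furthermore, if $(t_1,t_2)$ is a connected component of $\Omega$, then there exists $t_0\in(t_1,t_2)$ with $\tau(t_0)=\pm\lambda$.
   Context: Standing assumptions (A): $n\ge2$, $L>0$, $\beta\colon[0,L]\to(0,\infty)$ of bounded variation with $1/\beta$ bounded; $\tau\in W^{1,\infty}((0,L);S^{n-1})$ with $k=\operatorname{ess\,sup}|\tau'|>0$; $\lambda\in S^{n-1}$ and $u\in W^{1,\infty}((0,L);\mathbb{R}^n)\setminus\{0\}$ such that $u'+(u\cdot\tau')\tau=\beta(\lambda-(\lambda\cdot\tau)\tau)$ and $|u|\tau'=ku$ a.e. in $(0,L)$; $f=k|u|$, which then satisfies $f'=\beta\,\lambda\cdot\tau'$ and $f(\tau''+k^2\tau)=\beta k^2\,\mathrm{proj}^\perp_{\tau,\tau'}(\lambda)$ weakly in $(0,L)$ (where $\mathrm{proj}^\perp_{V,W}$ is the orthogonal projection onto the orthogonal complement of $\mathrm{span}\{V,W\}$); $\Omega=\{t\in[0,L]:f(t)>0\}$ (open relative to $[0,L]$); and $\tau(t),\tau'(t),\lambda$ are linearly dependent for every $t\in\Omega$ (note $\tau'$ is continuous on $\Omega$). *)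

theory Defs
  imports "HOL-Analysis.Analysis" "HOL-Probability.Essential_Supremum"
begin

definition bounded_variation_on :: "(real \<Rightarrow> real) \<Rightarrow> real \<Rightarrow> real \<Rightarrow> bool" where
  "bounded_variation_on f a b \<longleftrightarrow>
     (\<exists>V. \<forall>xs. sorted xs \<and> set xs \<subseteq> {a..b} \<longrightarrow>
        (\<Sum>i<length xs - 1. \<bar>f (xs ! Suc i) - f (xs ! i)\<bar>) \<le> V)"

end

theory Submission
  imports Defs
begin

lemma lip_mono_aux:
  fixes h :: "real \<Rightarrow> real"
  assumes ab: "a \<le> b" and lip: "C-lipschitz_on {a..b} h" and negN: "negligible N"
    and der: "\<And>t. t \<in> {a<..<b} - N \<Longrightarrow> \<exists>d. (h has_real_derivative d) (at t) \<and> d > 0"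
  shows "h a \<le> h b"
proof (rule ccontr)
  assume "\<not> h a \<le> h b"
  hence hlt: "h b < h a" by simp
  have contf: "continuous_on {a..b} h" using lip by (rule lipschitz_on_continuous_on)
  have sub: "{h b<..<h a} \<subseteq> h ` (N \<inter> {a<..<b})"
  proof
    fix y assume "y \<in> {h b<..<h a}"
    hence y1: "h b < y" and y2: "y < h a" by auto
    define S where "S = {a..b} \<inter> h -` {y..}"
    have "closed S" unfolding S_def by (rule continuous_closed_preimage[OF contf]) auto
    moreover have "bounded S" unfolding S_def by (rule bounded_subset[of "{a..b}"]) auto
    ultimately have "compact S" by (simp add: compact_eq_bounded_closed)
    moreover have "a \<in> S" using ab y2 by (auto simp: S_def)
    ultimately obtain m where mS: "m \<in> S" and mmax: "\<And>t. t \<in> S \<Longrightarrow> t \<le> m"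
      using compact_attains_sup[of S] by blast
    have mab: "a \<le> m" "m \<le> b" and hm: "y \<le> h m" using mS by (auto simp: S_def)
    have mb: "m < b" using mab hm y1 by (cases "m = b") auto
    have hm_eq: "h m = y"
    proof (rule ccontr)
      assume "h m \<noteq> y"
      hence "h m > y" using hm by simp
      have "continuous (at m within {a..b}) h" using contf mab
        by (simp add: continuous_on_eq_continuous_within)
      then obtain d where d: "d > 0" and dd: "\<And>t. t \<in> {a..b} \<Longrightarrow> dist t m < d \<Longrightarrow> dist (h t) (h m) < h m - y"
        unfolding continuous_within_eps_delta using \<open>h m > y\<close> by (metis diff_gt_0_iff_gt)
      define t where "t = min (m + d/2) b"
      have "t \<in> {a..b}" "dist t m < d" using mab mb d by (auto simp: t_def dist_real_def)
      hence "dist (h t) (h m) < h m - y" by (rule dd)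
      hence "t \<in> S" using \<open>t \<in> {a..b}\<close> by (auto simp: S_def dist_real_def)
      hence "t \<le> m" by (rule mmax)
      thus False using mb d by (auto simp: t_def)
    qed
    have ma: "a < m" using mab hm_eq y2 by (cases "m = a") auto
    have "m \<in> N"
    proof (rule ccontr)
      assume "m \<notin> N"
      then obtain dd where dd: "(h has_real_derivative dd) (at m)" "dd > 0" using der ma mb by auto
      obtain d where d: "d > 0" and inc: "\<And>e. e > 0 \<Longrightarrow> e < d \<Longrightarrow> h m < h (m + e)"
        using DERIV_pos_inc_right[OF dd] by blast
      define e where "e = min (d/2) ((b - m)/2)"
      have e: "e > 0" "e < d" using d mb by (auto simp: e_def)
      have "h m < h (m + e)" using inc e by blast
      moreover have "e \<le> (b - m)/2" unfolding e_def by (rule min.cobounded2)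
      hence "m + e \<in> {a..b}" using mab mb e by auto
      ultimately have "m + e \<in> S" using hm_eq by (auto simp: S_def)
      hence "m + e \<le> m" by (rule mmax)
      thus False using e by simp
    qed
    thus "y \<in> h ` (N \<inter> {a<..<b})" using hm_eq ma mb by force
  qed
  have "negligible (h ` (N \<inter> {a<..<b}))"
  proof (rule negligible_locally_Lipschitz_image)
    show "DIM(real) \<le> DIM(real)" by simp
    show "negligible (N \<inter> {a<..<b})" using negN negligible_subset by blast
    fix x assume x: "x \<in> N \<inter> {a<..<b}"
    show "\<exists>T B. open T \<and> x \<in> T \<and> (\<forall>y\<in>N \<inter> {a<..<b} \<inter> T. norm (h y - h x) \<le> B * norm (y - x))"
    proof (intro exI conjI)
      show "open UNIV" by simp
      show "x \<in> UNIV" by simp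
      show "\<forall>y\<in>N \<inter> {a<..<b} \<inter> UNIV. norm (h y - h x) \<le> C * norm (y - x)"
        using x lipschitz_onD[OF lip] by (auto simp: dist_norm)
    qed
  qed
  hence "negligible {h b<..<h a}" using sub negligible_subset by blast
  moreover have "{h b<..<h a} \<noteq> {}" using hlt by auto
  ultimately show False using open_not_negligible[of "{h b<..<h a}"] by auto
qed

lemma lip_mvt:
  fixes g :: "real \<Rightarrow> real"
  assumes ab: "a \<le> b" and lip: "C-lipschitz_on {a..b} g" and negN: "negligible N"
    and der: "\<And>t. t \<in> {a<..<b} - N \<Longrightarrow> \<exists>d. (g has_real_derivative d) (at t) \<and> d \<le> M"
  shows "g b - g a \<le> M * (b - a)"
proof -
  have key: "g b - g a \<le> (M + e) * (b - a)" if e: "e > 0" for e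
  proof -
    have "(\<lambda>t. (M+e)*t - g t) a \<le> (\<lambda>t. (M+e)*t - g t) b"
    proof (rule lip_mono_aux[where C = "\<bar>M+e\<bar> * 1 + C" and N = N and h = "\<lambda>t. (M+e)*t - g t"])
      show "a \<le> b" by fact
      show "negligible N" by fact
      show "(\<bar>M + e\<bar> * 1 + C)-lipschitz_on {a..b} (\<lambda>t. (M + e) * t - g t)"
        by (intro lipschitz_on_diff lipschitz_on_cmult_real lipschitz_on_id lip)
      fix t assume t: "t \<in> {a<..<b} - N"
      then obtain d where d: "(g has_real_derivative d) (at t)" "d \<le> M" using der by blast
      have "((\<lambda>t. (M+e)*t - g t) has_real_derivative ((M+e) - d)) (at t)"
        by (auto intro!: derivative_eq_intros d(1))
      thus "\<exists>d. ((\<lambda>t. (M + e) * t - g t) has_real_derivative d) (at t) \<and> 0 < d"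
        using d(2) e by (intro exI[of _ "(M+e) - d"]) auto
    qed
    thus ?thesis by (simp add: algebra_simps)
  qed
  show ?thesis
  proof (cases "a = b")
    case True thus ?thesis by simp
  next
    case False
    hence ba: "b - a > 0" using ab by simp
    show ?thesis
    proof (rule field_le_epsilon)
      fix e :: real assume "e > 0"
      have "g b - g a \<le> (M + e/(b-a)) * (b - a)" using key[of "e/(b-a)"] \<open>e>0\<close> ba by simp
      also have "\<dots> = M * (b - a) + e" using ba by (simp add: field_simps)
      finally show "g b - g a \<le> M * (b - a) + e" .
    qed
  qed
qed

lemma lip_mvt2:
  fixes g :: "real \<Rightarrow> real"
  assumes ab: "a \<le> b" and lip: "C-lipschitz_on {a..b} g" and negN: "negligible N"
    and der: "\<And>t. t \<in> {a<..<b} - N \<Longrightarrow> \<exists>d. (g has_real_derivative d) (at t) \<and> \<bar>d - c\<bar> \<le> e"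
  shows "\<bar>g b - g a - (b - a) * c\<bar> \<le> e * (b - a)"
proof -
  have 1: "g b - g a \<le> (c + e) * (b - a)"
  proof (rule lip_mvt[OF ab lip negN])
    fix t assume "t \<in> {a<..<b} - N"
    then obtain d where "(g has_real_derivative d) (at t)" "\<bar>d - c\<bar> \<le> e" using der by blast
    thus "\<exists>d. (g has_real_derivative d) (at t) \<and> d \<le> c + e" by (intro exI[of _ d]) auto
  qed
  have 2: "(\<lambda>t. - g t) b - (\<lambda>t. - g t) a \<le> (e - c) * (b - a)"
  proof (rule lip_mvt[OF ab _ negN, where g = "\<lambda>t. - g t"])
    show "(1 * C)-lipschitz_on {a..b} (\<lambda>t. - g t)"
      using lipschitz_on_cmult_real[OF lip, of "-1"] by simp
    fix t assume "t \<in> {a<..<b} - N"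
    then obtain d where d: "(g has_real_derivative d) (at t)" "\<bar>d - c\<bar> \<le> e" using der by blast
    have "((\<lambda>t. - g t) has_real_derivative (- d)) (at t)" using d(1) by (rule DERIV_minus)
    thus "\<exists>d. ((\<lambda>t. - g t) has_real_derivative d) (at t) \<and> d \<le> e - c" using d(2) by (intro exI[of _ "-d"]) auto
  qed
  show ?thesis using 1 2 by (simp add: abs_le_iff algebra_simps)
qed


lemma vd_inner:
  fixes f g :: "real \<Rightarrow> 'a::real_inner"
  assumes "(f has_vector_derivative f') (at t)" "(g has_vector_derivative g') (at t)"
  shows "((\<lambda>t. f t \<bullet> g t) has_real_derivative (f' \<bullet> g t + f t \<bullet> g')) (at t)"
proof -
  have "((\<lambda>t. f t \<bullet> g t) has_derivative (\<lambda>h. f t \<bullet> (h *\<^sub>R g') + (h *\<^sub>R f') \<bullet> g t)) (at t)"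
    using has_derivative_inner[OF assms[unfolded has_vector_derivative_def]] .
  thus ?thesis unfolding has_field_derivative_def
    by (rule has_derivative_eq_rhs) (auto simp: fun_eq_iff algebra_simps)
qed

lemma vd_eventually_ne:
  fixes f :: "real \<Rightarrow> 'a::real_normed_vector"
  assumes "(f has_vector_derivative d) (at t)" "d \<noteq> 0"
  shows "eventually (\<lambda>y. f y \<noteq> f t) (at t)"
proof -
  have "norm d / 2 > 0" using assms(2) by simp
  then obtain \<delta> where \<delta>: "\<delta> > 0" and H: "\<And>y. norm (y - t) < \<delta> \<Longrightarrow>
      norm (f y - f t - (y - t) *\<^sub>R d) \<le> norm d / 2 * norm (y - t)"
    using assms(1) unfolding has_vector_derivative_def has_derivative_at_alt by metis
  show ?thesis unfolding eventually_at
  proof (intro exI conjI ballI impI)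
    show "\<delta> > 0" by fact
    fix y :: real assume y: "y \<noteq> t \<and> dist y t < \<delta>"
    show "f y \<noteq> f t"
    proof
      assume "f y = f t"
      with H[of y] y have "norm ((y - t) *\<^sub>R d) \<le> norm d / 2 * norm (y - t)"
        by (simp add: dist_norm)
      hence "\<bar>y - t\<bar> * norm d \<le> norm d / 2 * \<bar>y - t\<bar>" by simp
      moreover have "\<bar>y - t\<bar> > 0" using y by simp
      ultimately show False using assms(2) by (simp add: mult.commute)
    qed
  qed
qed

lemma vec_id:
  fixes x y lam :: "'a::real_vector"
  assumes "r \<noteq> 0" "k \<noteq> 0" "s^2 + r^2 = 1" "lam = s *\<^sub>R x + (r/k) *\<^sub>R y"
  shows "(-1/r) *\<^sub>R (y - (k*r) *\<^sub>R lam) + (- (k * s) / r^2) *\<^sub>R (x - s *\<^sub>R lam) = 0"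
proof -
  have "(-1/r) *\<^sub>R (y - (k*r) *\<^sub>R lam) + (- (k * s) / r^2) *\<^sub>R (x - s *\<^sub>R lam)
     = (k * s + k * s^3/r^2 - k * s/r^2) *\<^sub>R x + (r + s^2/r - 1/r) *\<^sub>R y"
    using assms(1,2) unfolding assms(4)
    by (simp add: scaleR_add_right scaleR_diff_right scaleR_add_left scaleR_diff_left algebra_simps power2_eq_square power3_eq_cube)
  also have "k * s + k * s^3/r^2 - k * s/r^2 = 0"
  proof -
    have "k * s + k * s^3/r^2 - k * s/r^2 = k * s*(r^2 + s^2 - 1)/r^2" using assms(1)
      by (simp add: field_simps power2_eq_square power3_eq_cube)
    thus ?thesis using assms(3) by simp
  qed
  also have "r + s^2/r - 1/r = 0"
  proof -
    have "r + s^2/r - 1/r = (r^2 + s^2 - 1)/r" using assms(1)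
      by (simp add: field_simps power2_eq_square)
    thus ?thesis using assms(3) by simp
  qed
  finally show ?thesis by simp
qed

lemma vec_id2:
  fixes x y lam :: "'a::real_vector"
  assumes "r \<noteq> 0" "k \<noteq> 0" "s^2 + r^2 = 1" "lam = s *\<^sub>R x + (r/k) *\<^sub>R y"
  shows "(s/k) *\<^sub>R y - r *\<^sub>R x = (-1/r) *\<^sub>R (x - s *\<^sub>R lam)"
proof -
  have "(-1/r) *\<^sub>R (x - s *\<^sub>R lam) = (-1/r + s^2/r) *\<^sub>R x + (s/k) *\<^sub>R y"
    using assms(1,2) unfolding assms(4)
    by (simp add: scaleR_add_right scaleR_diff_right scaleR_add_left scaleR_diff_left algebra_simps power2_eq_square)
  also have "-1/r + s^2/r = - r"
  proof -
    have "-1/r + s^2/r = (s^2 - 1)/r" by (simp add: diff_divide_distrib)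
    moreover have "s^2 - 1 = -(r^2)" using assms(3) by simp
    ultimately show ?thesis using assms(1) by (simp add: power2_eq_square)
  qed
  finally show ?thesis by simp
qed

lemma core:
  fixes \<tau> d\<tau> :: "real \<Rightarrow> 'a::euclidean_space" and lam :: 'a and k t1 t2 :: real
  assumes t12: "t1 < t2"
    and dif: "\<And>t. t \<in> {t1<..<t2} \<Longrightarrow> (\<tau> has_vector_derivative d\<tau> t) (at t)"
    and cont: "continuous_on {t1<..<t2} d\<tau>"
    and sph: "\<And>t. t \<in> {t1<..<t2} \<Longrightarrow> \<tau> t \<bullet> \<tau> t = 1"
    and nk: "\<And>t. t \<in> {t1<..<t2} \<Longrightarrow> d\<tau> t \<bullet> d\<tau> t = k\<^sup>2"
    and kpos: "k > 0"
    and orth: "\<And>t. t \<in> {t1<..<t2} \<Longrightarrow> \<tau> t \<bullet> d\<tau> t = 0"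
    and spn: "\<And>t. t \<in> {t1<..<t2} \<Longrightarrow> lam = (lam \<bullet> \<tau> t) *\<^sub>R \<tau> t + ((lam \<bullet> d\<tau> t) / k\<^sup>2) *\<^sub>R d\<tau> t"
    and lam: "lam \<bullet> lam = 1"
  shows "\<exists>e \<phi>. e \<bullet> e = 1 \<and> e \<bullet> lam = 0 \<and>
           (\<forall>t\<in>{t1<..<t2}. \<tau> t = cos (k * t + \<phi>) *\<^sub>R lam + sin (k * t + \<phi>) *\<^sub>R e)"
proof -
  define I where "I = {t1<..<t2}"
  have oI: "open I" by (simp add: I_def)
  define s where "s = (\<lambda>t. lam \<bullet> \<tau> t)"
  define r where "r = (\<lambda>t. (lam \<bullet> d\<tau> t) / k)"
  define e where "e = (\<lambda>t. (s t / k) *\<^sub>R d\<tau> t - r t *\<^sub>R \<tau> t)"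
  have P1: "lam = s t *\<^sub>R \<tau> t + (r t / k) *\<^sub>R d\<tau> t" if "t \<in> I" for t
    using spn[of t] that kpos by (simp add: I_def s_def r_def power2_eq_square)
  have ldt: "lam \<bullet> d\<tau> t = k * r t" for t using kpos by (simp add: r_def)
  have P2: "(s t)\<^sup>2 + (r t)\<^sup>2 = 1" if t: "t \<in> I" for t
  proof -
    have "1 = lam \<bullet> (s t *\<^sub>R \<tau> t + (r t / k) *\<^sub>R d\<tau> t)" using P1[OF t] lam by simp
    also have "\<dots> = s t * s t + (r t / k) * (k * r t)"
      by (simp add: inner_add_right ldt[of t]) (simp add: s_def)
    finally show ?thesis using kpos by (simp add: power2_eq_square)
  qed
  have tt: "\<tau> t \<bullet> \<tau> t = 1" "d\<tau> t \<bullet> d\<tau> t = k\<^sup>2" "\<tau> t \<bullet> d\<tau> t = 0" "d\<tau> t \<bullet> \<tau> t = 0" if "t \<in> I" for t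
    using sph nk orth that by (auto simp: I_def inner_commute)
  have ds: "(s has_real_derivative k * r t) (at t)" if "t \<in> I" for t
  proof -
    have "(s has_real_derivative (0 \<bullet> \<tau> t + lam \<bullet> d\<tau> t)) (at t)"
      unfolding s_def by (rule vd_inner[OF has_vector_derivative_const dif]) (use that in \<open>simp add: I_def\<close>)
    thus ?thesis by (simp add: ldt)
  qed
  have contt: "continuous_on I \<tau>"
    using dif by (intro continuous_at_imp_continuous_on ballI has_vector_derivative_continuous) (auto simp: I_def)
  have conts: "continuous_on I s" unfolding s_def by (intro continuous_intros contt)
  have contr: "continuous_on I r" unfolding r_def using cont by (intro continuous_intros) (insert kpos, auto simp: I_def)
  have conte: "continuous_on I e" unfolding e_def using cont contt conts contr
    by (intro continuous_intros) (insert kpos, auto simp: I_def)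
  define N where "N = {t \<in> I. \<tau> t = lam \<or> \<tau> t = - lam}"
  have lam0: "lam \<noteq> 0" using lam by auto
  have notlim: "\<not> t islimpt N" if t: "t \<in> I" for t
  proof -
    have ct: "isCont \<tau> t" using dif[of t] t by (auto simp: I_def intro: has_vector_derivative_continuous)
    have ev1: "eventually (\<lambda>y. \<tau> y \<noteq> lam) (at t)"
    proof (cases "\<tau> t = lam")
      case True
      have "d\<tau> t \<noteq> 0" using tt(2)[OF t] kpos by auto
      with dif[of t] t True show ?thesis using vd_eventually_ne[of \<tau> "d\<tau> t" t] by (auto simp: I_def)
    next
      case False
      have "(\<tau> \<longlongrightarrow> \<tau> t) (at t)" using ct by (simp add: isCont_def)
      thus ?thesis using False tendsto_imp_eventually_ne by blast
    qed
    have ev2: "eventually (\<lambda>y. \<tau> y \<noteq> - lam) (at t)"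
    proof (cases "\<tau> t = - lam")
      case True
      have "d\<tau> t \<noteq> 0" using tt(2)[OF t] kpos by auto
      with dif[of t] t True show ?thesis using vd_eventually_ne[of \<tau> "d\<tau> t" t] by (auto simp: I_def)
    next
      case False
      have "(\<tau> \<longlongrightarrow> \<tau> t) (at t)" using ct by (simp add: isCont_def)
      thus ?thesis using False tendsto_imp_eventually_ne by blast
    qed
    have "eventually (\<lambda>y. y \<notin> N) (at t)"
      using eventually_conj[OF ev1 ev2] by eventually_elim (auto simp: N_def)
    thus ?thesis by (simp add: islimpt_iff_eventually)
  qed
  have de: "(e has_vector_derivative 0) (at t0)" if t0: "t0 \<in> I" "t0 \<notin> N" for t0
  proof -
    have r0: "r t0 \<noteq> 0"
    proof
      assume "r t0 = 0"
      hence "(s t0)\<^sup>2 = 1" using P2[OF t0(1)] by simp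
      hence "s t0 = 1 \<or> s t0 = -1" by (simp add: power2_eq_1_iff)
      moreover have "lam = s t0 *\<^sub>R \<tau> t0" using P1[OF t0(1)] \<open>r t0 = 0\<close> by simp
      ultimately have "\<tau> t0 = lam \<or> \<tau> t0 = - lam" by auto
      thus False using t0 by (auto simp: N_def)
    qed
    define \<sigma> where "\<sigma> = sgn (r t0)"
    have \<sigma>: "\<sigma> * \<sigma> = 1" "\<sigma> * r t0 > 0" using r0 by (auto simp: \<sigma>_def sgn_if)
    have "isCont (\<lambda>t. \<sigma> * r t) t0"
      using contr t0 oI by (intro continuous_intros) (simp add: continuous_on_eq_continuous_at)
    hence "((\<lambda>t. \<sigma> * r t) \<longlongrightarrow> \<sigma> * r t0) (at t0)" by (simp add: isCont_def)
    hence "eventually (\<lambda>y. 0 < \<sigma> * r y) (at t0)" using \<sigma>(2) by (rule order_tendstoD(1))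
    then obtain d1 where d1: "d1 > 0" and H0: "\<And>y. y \<noteq> t0 \<Longrightarrow> dist y t0 < d1 \<Longrightarrow> \<sigma> * r y > 0"
      unfolding eventually_at by auto
    have H1: "\<sigma> * r y > 0" if "dist y t0 < d1" for y
      using H0[of y] that \<sigma>(2) by (cases "y = t0") auto
    define U where "U = ball t0 d1 \<inter> I"
    have oU: "open U" using oI by (simp add: U_def open_Int)
    have t0U: "t0 \<in> U" using d1 t0 by (simp add: U_def)
    have UI: "U \<subseteq> I" by (auto simp: U_def)
    have rU: "\<sigma> * r y > 0" if "y \<in> U" for y using H1 that by (auto simp: U_def dist_commute)
    have \<sigma>c: "\<sigma> = 1 \<or> \<sigma> = -1" using r0 by (auto simp: \<sigma>_def sgn_if)
    have sq: "sqrt (1 - (s y)^2) = \<sigma> * r y" if y: "y \<in> U" for y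
    proof -
      have "1 - (s y)^2 = (r y)^2" using P2[of y] y UI by auto
      hence "sqrt (1 - (s y)^2) = \<bar>r y\<bar>" by simp
      thus ?thesis using \<sigma>c rU[OF y] by auto
    qed
    have rsq: "\<sigma> * sqrt (1 - (s y)^2) = r y" if y: "y \<in> U" for y
      using sq[OF y] \<sigma>c by auto
    have "(r t0)^2 > 0" using r0 by simp
    hence p0: "1 - (s t0)^2 > 0" using P2[OF t0(1)] by linarith
    have d1': "((\<lambda>y. 1 - (s y)^2) has_real_derivative (- (of_nat 2 * (k * r t0 * (s t0)^(2 - Suc 0))))) (at t0)"
      by (intro DERIV_diff[of "\<lambda>_. 1" 0, simplified] DERIV_power ds t0 DERIV_const)
    have "((\<lambda>y. \<sigma> * sqrt (1 - (s y)^2)) has_real_derivative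
            \<sigma> * (inverse (sqrt (1 - (s t0)^2)) / 2 * (- (of_nat 2 * (k * r t0 * (s t0)^(2 - Suc 0)))))) (at t0)"
      by (intro DERIV_cmult DERIV_chain2[OF DERIV_real_sqrt[OF p0] d1'])
    moreover have "\<sigma> * (inverse (sqrt (1 - (s t0)^2)) / 2 * (- (of_nat 2 * (k * r t0 * (s t0)^(2 - Suc 0)))))
                  = - (k * s t0)"
    proof -
      have \<sigma>0: "\<sigma> \<noteq> 0" using \<sigma>c by auto
      have "\<sigma> * (inverse (sqrt (1 - (s t0)^2)) / 2 * (- (of_nat 2 * (k * r t0 * (s t0)^(2 - Suc 0)))))
           = \<sigma> * (inverse (\<sigma> * r t0) / 2 * (- (2 * (k * r t0 * s t0))))" using sq[OF t0U] by simp
      also have "\<dots> = - (k * s t0)" using \<sigma>0 r0 by (simp add: field_simps)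
      finally show ?thesis .
    qed
    ultimately have "((\<lambda>y. \<sigma> * sqrt (1 - (s y)^2)) has_real_derivative - (k * s t0)) (at t0)" by (rule DERIV_cong)
    hence dr: "(r has_real_derivative - (k * s t0)) (at t0)"
      by (rule has_field_derivative_transform_within_open[OF _ oU t0U]) (rule rsq)
    have dinv: "((\<lambda>y. -1 / r y) has_real_derivative (- (k * s t0) / (r t0)^2)) (at t0)"
      using DERIV_divide[OF DERIV_const dr r0, of "-1"] by (simp add: power2_eq_square)
    have dw: "((\<lambda>y. \<tau> y - s y *\<^sub>R lam) has_vector_derivative (d\<tau> t0 - (k * r t0) *\<^sub>R lam)) (at t0)"
      using has_vector_derivative_diff[OF dif has_vector_derivative_scaleR[OF ds[OF t0(1)] has_vector_derivative_const]]
        t0 by (simp add: I_def)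
    have dG: "((\<lambda>y. (-1 / r y) *\<^sub>R (\<tau> y - s y *\<^sub>R lam)) has_vector_derivative
         ((-1 / r t0) *\<^sub>R (d\<tau> t0 - (k * r t0) *\<^sub>R lam) + (- (k * s t0) / (r t0)^2) *\<^sub>R (\<tau> t0 - s t0 *\<^sub>R lam))) (at t0)"
      by (rule has_vector_derivative_scaleR[OF dinv dw])
    moreover have "(-1 / r t0) *\<^sub>R (d\<tau> t0 - (k * r t0) *\<^sub>R lam) + (- (k * s t0) / (r t0)^2) *\<^sub>R (\<tau> t0 - s t0 *\<^sub>R lam) = 0"
      by (rule vec_id) (use r0 kpos P2[OF t0(1)] P1[OF t0(1)] in auto)
    ultimately have dG0: "((\<lambda>y. (-1 / r y) *\<^sub>R (\<tau> y - s y *\<^sub>R lam)) has_vector_derivative 0) (at t0)" by simp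
    show ?thesis
    proof (rule has_vector_derivative_transform_within_open[OF dG0 oU t0U])
      fix y assume y: "y \<in> U"
      have "r y \<noteq> 0" using rU[OF y] by auto
      moreover have "y \<in> I" using y UI by auto
      ultimately show "(-1 / r y) *\<^sub>R (\<tau> y - s y *\<^sub>R lam) = e y"
        unfolding e_def by (intro vec_id2[symmetric]) (use kpos P2 P1 in auto)
    qed
  qed
  have tcI: "(t1 + t2) / 2 \<in> I" using t12 by (simp add: I_def)
  define tc where "tc = (t1 + t2) / 2"
  have tc: "tc \<in> I" using tcI by (simp add: tc_def)
  define e0 where "e0 = e tc"
  have econst: "e t = e0" if t: "t \<in> I" for t
  proof -
    define a where "a = min t tc"
    define b where "b = max t tc"
    have "t1 < a" using t tc by (simp add: a_def I_def)
    moreover have "b < t2" using t tc by (simp add: b_def I_def)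
    ultimately have abI: "{a..b} \<subseteq> I" by (auto simp: I_def)
    have fin: "finite ({a..b} \<inter> N)"
      by (rule finite_not_islimpt_in_compact[OF compact_Icc]) (use abI notlim in blast)
    have H: "e x = e a" if x: "x \<in> {a..b}" for x
    proof (rule has_derivative_zero_unique_strong_interval[OF fin, where f = e and y = "e a" and x = x and a = a and b = b])
      show "continuous_on {a..b} e" by (rule continuous_on_subset[OF conte abI])
      show "e a = e a" ..
      show "x \<in> {a..b}" by fact
      fix y assume y: "y \<in> {a..b} - {a..b} \<inter> N"
      hence "y \<in> I" "y \<notin> N" using abI by auto
      hence "(e has_vector_derivative 0) (at y)" by (rule de)
      thus "(e has_derivative (\<lambda>h. 0)) (at y within {a..b})"
        unfolding has_vector_derivative_def by (auto intro: has_derivative_at_withinI)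
    qed
    have "t \<in> {a..b}" "tc \<in> {a..b}" by (simp_all add: a_def b_def)
    hence "e t = e a" "e tc = e a" using H by blast+
    thus ?thesis unfolding e0_def by simp
  qed
  have tauf: "\<tau> t = s t *\<^sub>R lam - r t *\<^sub>R e0" if t: "t \<in> I" for t
  proof -
    have "s t *\<^sub>R lam - r t *\<^sub>R e t = ((s t)^2 + (r t)^2) *\<^sub>R \<tau> t"
      using kpos by (subst P1[OF t]) (simp add: e_def scaleR_add_right scaleR_diff_right scaleR_add_left algebra_simps power2_eq_square)
    thus ?thesis using P2[OF t] econst[OF t] by simp
  qed
  have e0e0: "e0 \<bullet> e0 = 1"
  proof -
    have "e0 \<bullet> e0 = (s tc)^2 / k^2 * (d\<tau> tc \<bullet> d\<tau> tc) - 2 * (s tc / k) * r tc * (\<tau> tc \<bullet> d\<tau> tc) + (r tc)^2 * (\<tau> tc \<bullet> \<tau> tc)"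
      by (simp add: e0_def e_def inner_diff_left inner_diff_right inner_commute power2_eq_square algebra_simps)
    also have "\<dots> = (s tc)^2 + (r tc)^2" using tt[OF tc] kpos by simp
    finally show ?thesis using P2[OF tc] by simp
  qed
  have e0lam: "e0 \<bullet> lam = 0"
  proof -
    have "e0 \<bullet> lam = (s tc / k) * (d\<tau> tc \<bullet> lam) - r tc * (\<tau> tc \<bullet> lam)"
      by (simp add: e0_def e_def inner_diff_left)
    moreover have "d\<tau> tc \<bullet> lam = k * r tc" using ldt[of tc] by (simp add: inner_commute)
    moreover have "\<tau> tc \<bullet> lam = s tc" by (simp add: s_def inner_commute)
    ultimately show ?thesis using kpos by simp
  qed
  have rf: "r t = - (\<tau> t \<bullet> e0)" if t: "t \<in> I" for t
  proof -
    have "\<tau> t \<bullet> e t = (s t / k) * (\<tau> t \<bullet> d\<tau> t) - r t * (\<tau> t \<bullet> \<tau> t)"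
      by (simp add: e_def inner_diff_right)
    thus ?thesis using tt[OF t] econst[OF t] by simp
  qed
  have dr2: "(r has_real_derivative - (k * s t)) (at t)" if t: "t \<in> I" for t
  proof -
    have "((\<lambda>y. - (\<tau> y \<bullet> e0)) has_real_derivative - (d\<tau> t \<bullet> e0 + \<tau> t \<bullet> 0)) (at t)"
      by (intro DERIV_minus vd_inner[OF _ has_vector_derivative_const]) (use dif t in \<open>auto simp: I_def\<close>)
    moreover have "d\<tau> t \<bullet> e0 = k * s t"
    proof -
      have "d\<tau> t \<bullet> e t = (s t / k) * (d\<tau> t \<bullet> d\<tau> t) - r t * (d\<tau> t \<bullet> \<tau> t)"
        by (simp add: e_def inner_diff_right)
      thus ?thesis using tt[OF t] econst[OF t] kpos by (simp add: power2_eq_square)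
    qed
    ultimately have "((\<lambda>y. - (\<tau> y \<bullet> e0)) has_real_derivative - (k * s t)) (at t)" by simp
    thus ?thesis by (rule has_field_derivative_transform_within_open[OF _ oI t]) (simp add: rf)
  qed
  obtain \<theta> where \<theta>: "s tc = cos \<theta>" "- r tc = sin \<theta>"
    using sincos_total_2pi[of "s tc" "- r tc"] P2[OF tc] by auto
  define \<phi> where "\<phi> = \<theta> - k * tc"
  define D where "D = (\<lambda>y. (s y - cos (k * y + \<phi>))^2 + (r y + sin (k * y + \<phi>))^2)"
  have dD: "(D has_real_derivative 0) (at y within I)" if y: "y \<in> I" for y
  proof -
    have dc: "((\<lambda>y. cos (k * y + \<phi>)) has_real_derivative (- sin (k * y + \<phi>) * k)) (at y)"
      by (auto intro!: derivative_eq_intros)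
    have dsn: "((\<lambda>y. sin (k * y + \<phi>)) has_real_derivative (cos (k * y + \<phi>) * k)) (at y)"
      by (auto intro!: derivative_eq_intros)
    have "((\<lambda>y. (s y - cos (k * y + \<phi>))^2 + (r y + sin (k * y + \<phi>))^2) has_real_derivative
       (of_nat 2 * ((k * r y - (- sin (k * y + \<phi>) * k)) * (s y - cos (k * y + \<phi>))^(2 - Suc 0)) +
        of_nat 2 * ((- (k * s y) + cos (k * y + \<phi>) * k) * (r y + sin (k * y + \<phi>))^(2 - Suc 0)))) (at y)"
      by (rule DERIV_add[OF DERIV_power[OF DERIV_diff[OF ds[OF y] dc]] DERIV_power[OF DERIV_add[OF dr2[OF y] dsn]]])
    moreover have "(of_nat 2 * ((k * r y - (- sin (k * y + \<phi>) * k)) * (s y - cos (k * y + \<phi>))^(2 - Suc 0)) +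
        of_nat 2 * ((- (k * s y) + cos (k * y + \<phi>) * k) * (r y + sin (k * y + \<phi>))^(2 - Suc 0))) = (0::real)"
      by (simp add: algebra_simps)
    ultimately have "(D has_real_derivative 0) (at y)" unfolding D_def by simp
    thus ?thesis by (rule has_field_derivative_at_within)
  qed
  obtain c0 where c0: "\<forall>y\<in>I. D y = c0"
    using has_field_derivative_zero_constant[of I D] dD by (auto simp: I_def)
  have "D tc = 0" using \<theta> by (simp add: D_def \<phi>_def)
  hence D0: "D y = 0" if "y \<in> I" for y using c0 tc that by auto
  show ?thesis
  proof (intro exI conjI ballI)
    show "e0 \<bullet> e0 = 1" by fact
    show "e0 \<bullet> lam = 0" by fact
    fix t assume t: "t \<in> {t1<..<t2}"
    hence tI: "t \<in> I" by (simp add: I_def)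
    have "(s t - cos (k * t + \<phi>))^2 + (r t + sin (k * t + \<phi>))^2 = 0" using D0[OF tI] by (simp add: D_def)
    hence "s t = cos (k * t + \<phi>)" "r t = - sin (k * t + \<phi>)"
      by (simp_all add: sum_power2_eq_zero_iff)
    thus "\<tau> t = cos (k * t + \<phi>) *\<^sub>R lam + sin (k * t + \<phi>) *\<^sub>R e0"
      using tauf[OF tI] by simp
  qed
qed

lemma AE_negl:
  assumes "AE t in lborel. P t"
  obtains N where "negligible N" "\<And>t. t \<notin> N \<Longrightarrow> P t"
proof -
  from assms obtain N where N: "{x \<in> space lborel. \<not> P x} \<subseteq> N" "emeasure lborel N = 0" "N \<in> sets lborel"
    by (rule AE_E)
  have "N \<in> null_sets lborel" using N by (simp add: null_sets_def)
  hence "negligible N" by (simp add: negligible_iff_null_sets null_sets_completionI)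
  thus ?thesis using that N(1) by auto
qed

lemma open_negl_const:
  fixes f :: "real \<Rightarrow> 'a::real_normed_vector"
  assumes oI: "open I" and negN: "negligible N" and cf: "continuous_on I f"
    and H: "\<And>t. t \<in> I - N \<Longrightarrow> f t = c" and t: "t \<in> I"
  shows "f t = c"
proof (rule ccontr)
  assume ne: "f t \<noteq> c"
  define S where "S = I \<inter> f -` (- {c})"
  have oS: "open S" unfolding S_def by (rule continuous_open_preimage[OF cf oI]) (simp add: open_Compl)
  have "S \<subseteq> N" using H by (auto simp: S_def)
  hence "negligible S" using negN negligible_subset by blast
  moreover have "S \<noteq> {}" using t ne by (auto simp: S_def)
  ultimately show False using open_not_negligible[OF oS] by blast
qed

lemma lipschitz_norm_comp:
  fixes u :: "real \<Rightarrow> 'a::real_normed_vector"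
  assumes "C-lipschitz_on S u"
  shows "C-lipschitz_on S (\<lambda>t. norm (u t))"
proof (rule lipschitz_onI)
  fix x y assume xy: "x \<in> S" "y \<in> S"
  have "dist (norm (u x)) (norm (u y)) \<le> norm (u x - u y)"
    unfolding dist_real_def by (rule norm_triangle_ineq3)
  also have "\<dots> \<le> C * dist x y" using lipschitz_onD[OF assms xy] by (simp add: dist_norm)
  finally show "dist (norm (u x)) (norm (u y)) \<le> C * dist x y" .
next
  show "0 \<le> C" using assms by (rule lipschitz_on_nonneg)
qed

lemma deriv_from_ae:
  fixes \<tau> d\<tau> :: "real \<Rightarrow> 'a::real_inner"
  assumes lip: "C-lipschitz_on {a..b} \<tau>" and negN: "negligible N"
    and der: "\<And>t. t \<in> {a<..<b} - N \<Longrightarrow> (\<tau> has_vector_derivative d\<tau> t) (at t)"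
    and cont: "continuous_on {a<..<b} d\<tau>" and t0: "t0 \<in> {a<..<b}"
  shows "(\<tau> has_vector_derivative d\<tau> t0) (at t0)"
  unfolding has_vector_derivative_def has_derivative_at_alt
proof (intro conjI allI impI)
  show "bounded_linear (\<lambda>h. h *\<^sub>R d\<tau> t0)" by (rule bounded_linear_scaleR_left)
  fix \<epsilon> :: real assume \<epsilon>: "\<epsilon> > 0"
  have "isCont d\<tau> t0" using cont t0 by (simp add: continuous_on_eq_continuous_at)
  then obtain d1 where d1: "d1 > 0" and H: "\<And>y. dist y t0 < d1 \<Longrightarrow> dist (d\<tau> y) (d\<tau> t0) < \<epsilon>"
    using \<epsilon> unfolding continuous_at_eps_delta by blast
  define d where "d = min d1 (min (t0 - a) (b - t0))"
  have d: "d > 0" using d1 t0 by (simp add: d_def)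
  show "\<exists>d>0. \<forall>y. norm (y - t0) < d \<longrightarrow> norm (\<tau> y - \<tau> t0 - (y - t0) *\<^sub>R d\<tau> t0) \<le> \<epsilon> * norm (y - t0)"
  proof (intro exI conjI allI impI)
    show "d > 0" by fact
    fix y assume y: "norm (y - t0) < d"
    have yd1: "\<bar>y - t0\<bar> < d1" and ya: "a < y" and yb: "y < b" using y by (auto simp: d_def)
    define D where "D = \<tau> y - \<tau> t0 - (y - t0) *\<^sub>R d\<tau> t0"
    have "norm D \<le> \<epsilon> * \<bar>y - t0\<bar>"
    proof (cases "D = 0")
      case True thus ?thesis using \<epsilon> by simp
    next
      case False
      define v where "v = D /\<^sub>R norm D"
      have nv: "norm v = 1" using False by (simp add: v_def)
      have vD: "v \<bullet> D = norm D" using False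
        by (simp add: v_def dot_square_norm power2_eq_square)
      define g where "g = (\<lambda>t. v \<bullet> \<tau> t)"
      have gl: "C-lipschitz_on {a..b} g"
      proof (rule lipschitz_onI)
        fix x z assume xz: "x \<in> {a..b}" "z \<in> {a..b}"
        have "dist (g x) (g z) = \<bar>v \<bullet> (\<tau> x - \<tau> z)\<bar>" by (simp add: g_def dist_real_def inner_diff_right)
        also have "\<dots> \<le> norm v * norm (\<tau> x - \<tau> z)" by (rule Cauchy_Schwarz_ineq2)
        also have "\<dots> = dist (\<tau> x) (\<tau> z)" by (simp add: nv dist_norm)
        also have "\<dots> \<le> C * dist x z" using lipschitz_onD[OF lip xz] .
        finally show "dist (g x) (g z) \<le> C * dist x z" .
      next
        show "0 \<le> C" using lip by (rule lipschitz_on_nonneg)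
      qed
      have gder: "\<exists>dd. (g has_real_derivative dd) (at t) \<and> \<bar>dd - v \<bullet> d\<tau> t0\<bar> \<le> \<epsilon>"
        if t: "t \<in> {a<..<b}" "t \<notin> N" "dist t t0 < d1" for t
      proof -
        have "(g has_real_derivative (0 \<bullet> \<tau> t + v \<bullet> d\<tau> t)) (at t)"
          unfolding g_def by (rule vd_inner[OF has_vector_derivative_const der]) (use t in auto)
        moreover have "\<bar>v \<bullet> d\<tau> t - v \<bullet> d\<tau> t0\<bar> \<le> \<epsilon>"
        proof -
          have "\<bar>v \<bullet> d\<tau> t - v \<bullet> d\<tau> t0\<bar> = \<bar>v \<bullet> (d\<tau> t - d\<tau> t0)\<bar>" by (simp add: inner_diff_right)
          also have "\<dots> \<le> norm v * norm (d\<tau> t - d\<tau> t0)" by (rule Cauchy_Schwarz_ineq2)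
          also have "\<dots> < \<epsilon>" using H[OF t(3)] nv by (simp add: dist_norm)
          finally show ?thesis by simp
        qed
        ultimately show ?thesis by auto
      qed
      have gD: "g y - g t0 - (y - t0) * (v \<bullet> d\<tau> t0) = v \<bullet> D"
        by (simp add: g_def D_def inner_diff_right algebra_simps)
      have "\<bar>v \<bullet> D\<bar> \<le> \<epsilon> * \<bar>y - t0\<bar>"
      proof (cases "t0 \<le> y")
        case True
        have "\<bar>g y - g t0 - (y - t0) * (v \<bullet> d\<tau> t0)\<bar> \<le> \<epsilon> * (y - t0)"
        proof (rule lip_mvt2[OF True _ negN])
          show "C-lipschitz_on {t0..y} g" by (rule lipschitz_on_subset[OF gl]) (use t0 yb in auto)
          fix t assume t: "t \<in> {t0<..<y} - N"
          show "\<exists>dd. (g has_real_derivative dd) (at t) \<and> \<bar>dd - v \<bullet> d\<tau> t0\<bar> \<le> \<epsilon>"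
            by (rule gder) (use t t0 yb yd1 in \<open>auto simp: dist_real_def\<close>)
        qed
        thus ?thesis using gD True by simp
      next
        case False
        hence yt: "y \<le> t0" by simp
        have "\<bar>g t0 - g y - (t0 - y) * (v \<bullet> d\<tau> t0)\<bar> \<le> \<epsilon> * (t0 - y)"
        proof (rule lip_mvt2[OF yt _ negN])
          show "C-lipschitz_on {y..t0} g" by (rule lipschitz_on_subset[OF gl]) (use t0 ya in auto)
          fix t assume t: "t \<in> {y<..<t0} - N"
          show "\<exists>dd. (g has_real_derivative dd) (at t) \<and> \<bar>dd - v \<bullet> d\<tau> t0\<bar> \<le> \<epsilon>"
            by (rule gder) (use t t0 ya yd1 in \<open>auto simp: dist_real_def\<close>)
        qed
        moreover have "g t0 - g y - (t0 - y) * (v \<bullet> d\<tau> t0) = - (v \<bullet> D)" using gD by (simp add: algebra_simps)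
        ultimately show ?thesis using yt by simp
      qed
      thus ?thesis using vD by simp
    qed
    thus "norm (\<tau> y - \<tau> t0 - (y - t0) *\<^sub>R d\<tau> t0) \<le> \<epsilon> * norm (y - t0)" by (simp add: D_def)
  qed
qed


theorem mainTheorem14:
  fixes L k :: real
    and \<beta> :: "real \<Rightarrow> real"
    and \<tau> d\<tau> u du :: "real \<Rightarrow> real ^ 'n"
    and lam :: "real ^ 'n"
    and \<Omega> :: "real set"
    and t1 t2 :: real
  assumes n2: "CARD('n) \<ge> 2"
    and L: "L > 0"
    and \<beta>_pos: "\<forall>t\<in>{0..L}. \<beta> t > 0"
    and \<beta>_bv: "bounded_variation_on \<beta> 0 L"
    and \<beta>_inv_bdd: "\<exists>B. \<forall>t\<in>{0..L}. 1 / \<beta> t \<le> B"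
    and \<tau>_lip: "\<exists>C. C-lipschitz_on {0..L} \<tau>"
    and \<tau>_sphere: "\<forall>t\<in>{0..L}. norm (\<tau> t) = 1"
    and \<tau>_deriv: "AE t in lborel. t \<in> {0<..<L} \<longrightarrow> (\<tau> has_vector_derivative d\<tau> t) (at t)"
    and k_def: "esssup (restrict_space lborel {0<..<L}) (\<lambda>t. ereal (norm (d\<tau> t))) = ereal k"
    and k_pos: "k > 0"
    and lam_sphere: "norm lam = 1"
    and u_lip: "\<exists>C. C-lipschitz_on {0..L} u"
    and u_deriv: "AE t in lborel. t \<in> {0<..<L} \<longrightarrow> (u has_vector_derivative du t) (at t)"
    and u_nonzero: "\<exists>t\<in>{0..L}. u t \<noteq> 0"
    and eq1: "AE t in lborel. t \<in> {0<..<L} \<longrightarrow>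
               du t + (u t \<bullet> d\<tau> t) *\<^sub>R \<tau> t = \<beta> t *\<^sub>R (lam - (lam \<bullet> \<tau> t) *\<^sub>R \<tau> t)"
    and eq2: "AE t in lborel. t \<in> {0<..<L} \<longrightarrow> norm (u t) *\<^sub>R d\<tau> t = k *\<^sub>R u t"
    and \<Omega>_def: "\<Omega> = {t \<in> {0..L}. k * norm (u t) > 0}"
    and d\<tau>_cont: "continuous_on \<Omega> d\<tau>"
    and dep: "\<forall>t\<in>\<Omega>. \<exists>a b c. (a, b, c) \<noteq> (0, 0, 0) \<and>
                 a *\<^sub>R \<tau> t + b *\<^sub>R d\<tau> t + c *\<^sub>R lam = 0"
  shows "({t1<..<t2} \<subseteq> \<Omega> \<longrightarrow>
            (\<exists>e \<phi>. norm e = 1 \<and> e \<bullet> lam = 0 \<and>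
               (\<forall>t\<in>{t1<..<t2}. \<tau> t = cos (k * t + \<phi>) *\<^sub>R lam + sin (k * t + \<phi>) *\<^sub>R e)))
       \<and> ({t1<..<t2} \<in> components \<Omega> \<longrightarrow>
            (\<exists>t0\<in>{t1<..<t2}. \<tau> t0 = lam \<or> \<tau> t0 = - lam))"
proof -
  obtain Ct where Ct: "Ct-lipschitz_on {0..L} \<tau>" using \<tau>_lip by blast
  obtain Cu where Cu: "Cu-lipschitz_on {0..L} u" using u_lip by blast
  have "AE t in lborel. t \<in> {0<..<L} \<longrightarrow> ((\<tau> has_vector_derivative d\<tau> t) (at t) \<and>
      (u has_vector_derivative du t) (at t) \<and>
      du t + (u t \<bullet> d\<tau> t) *\<^sub>R \<tau> t = \<beta> t *\<^sub>R (lam - (lam \<bullet> \<tau> t) *\<^sub>R \<tau> t) \<and>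
      norm (u t) *\<^sub>R d\<tau> t = k *\<^sub>R u t)"
    using \<tau>_deriv u_deriv eq1 eq2 by eventually_elim blast
  then obtain N0 where negN0: "negligible N0" and N0: "\<And>t. t \<notin> N0 \<Longrightarrow> t \<in> {0<..<L} \<longrightarrow>
      ((\<tau> has_vector_derivative d\<tau> t) (at t) \<and>
      (u has_vector_derivative du t) (at t) \<and>
      du t + (u t \<bullet> d\<tau> t) *\<^sub>R \<tau> t = \<beta> t *\<^sub>R (lam - (lam \<bullet> \<tau> t) *\<^sub>R \<tau> t) \<and>
      norm (u t) *\<^sub>R d\<tau> t = k *\<^sub>R u t)"
    by (rule AE_negl) blast
  have Om_sub: "\<Omega> \<subseteq> {0..L}" using \<Omega>_def by auto
  have uOm: "u t \<noteq> 0" if "t \<in> \<Omega>" for t using that \<Omega>_def by auto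
  have lamlam: "lam \<bullet> lam = 1" using lam_sphere by (simp add: norm_eq_1)
  define I where "I = {t1<..<t2}"
  have oI: "open I" by (simp add: I_def)
  have bnds: "0 \<le> t1 \<and> t2 \<le> L \<and> I \<subseteq> {0<..<L}" if sub: "I \<subseteq> \<Omega>" and t12: "t1 < t2"
  proof -
    have "I \<subseteq> interior {0..L}" by (rule interior_maximal) (use sub Om_sub oI in auto)
    hence I0L: "I \<subseteq> {0<..<L}" by simp
    have "closure I \<subseteq> closure {0<..<L}" using I0L by (rule closure_mono)
    hence "{t1..t2} \<subseteq> {0..L}" using t12 L by (simp add: I_def)
    thus ?thesis using t12 I0L by auto
  qed
  have mainfacts: "(\<forall>t\<in>I. (\<tau> has_vector_derivative d\<tau> t) (at t) \<and> \<tau> t \<bullet> d\<tau> t = 0 \<and> norm (d\<tau> t) = k) \<and>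
      (\<exists>e \<phi>. norm e = 1 \<and> e \<bullet> lam = 0 \<and>
               (\<forall>t\<in>I. \<tau> t = cos (k * t + \<phi>) *\<^sub>R lam + sin (k * t + \<phi>) *\<^sub>R e))"
    if sub: "I \<subseteq> \<Omega>" and t12: "t1 < t2"
  proof -
    have t1L: "0 \<le> t1" "t2 \<le> L" and I0L: "I \<subseteq> {0<..<L}" using bnds[OF sub t12] by auto
    have contI: "continuous_on I d\<tau>" by (rule continuous_on_subset[OF d\<tau>_cont sub])
    have dif: "(\<tau> has_vector_derivative d\<tau> t) (at t)" if t: "t \<in> I" for t
    proof (rule deriv_from_ae[of Ct t1 t2 \<tau> N0 d\<tau> t])
      show "Ct-lipschitz_on {t1..t2} \<tau>" by (rule lipschitz_on_subset[OF Ct]) (use t1L in auto)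
      show "negligible N0" by fact
      show "continuous_on {t1<..<t2} d\<tau>" using contI by (simp add: I_def)
      show "t \<in> {t1<..<t2}" using t by (simp add: I_def)
      fix s assume s: "s \<in> {t1<..<t2} - N0"
      hence "s \<in> {0<..<L}" using I0L by (auto simp: I_def)
      thus "(\<tau> has_vector_derivative d\<tau> s) (at s)" using N0[of s] s by auto
    qed
    have nk: "norm (d\<tau> t) = k" if t: "t \<in> I" for t
    proof (rule open_negl_const[OF oI negN0 _ _ t])
      show "continuous_on I (\<lambda>t. norm (d\<tau> t))" using contI by (intro continuous_intros)
      fix s assume s: "s \<in> I - N0"
      hence s0L: "s \<in> {0<..<L}" using I0L by auto
      have "norm (u s) *\<^sub>R d\<tau> s = k *\<^sub>R u s" using N0[of s] s s0L by auto
      hence "norm (u s) * norm (d\<tau> s) = k * norm (u s)" using k_pos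
        by (metis norm_scaleR abs_of_pos abs_norm_cancel)
      moreover have "norm (u s) \<noteq> 0" using uOm[of s] s sub by auto
      ultimately show "norm (d\<tau> s) = k" by (simp add: mult.commute)
    qed
    have tt1: "\<tau> t \<bullet> \<tau> t = 1" if "t \<in> I" for t
      using \<tau>_sphere that I0L by (auto simp: norm_eq_1)
    have orth: "\<tau> t \<bullet> d\<tau> t = 0" if t: "t \<in> I" for t
    proof -
      have "((\<lambda>y. \<tau> y \<bullet> \<tau> y) has_real_derivative (d\<tau> t \<bullet> \<tau> t + \<tau> t \<bullet> d\<tau> t)) (at t)"
        by (rule vd_inner[OF dif[OF t] dif[OF t]])
      moreover have "((\<lambda>y. \<tau> y \<bullet> \<tau> y) has_real_derivative 0) (at t)"
        by (rule has_field_derivative_transform_within_open[OF DERIV_const oI t]) (simp add: tt1)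
      ultimately have "d\<tau> t \<bullet> \<tau> t + \<tau> t \<bullet> d\<tau> t = 0" by (rule DERIV_unique)
      thus ?thesis by (simp add: inner_commute)
    qed
    have spn: "lam = (lam \<bullet> \<tau> t) *\<^sub>R \<tau> t + ((lam \<bullet> d\<tau> t) / k^2) *\<^sub>R d\<tau> t" if t: "t \<in> I" for t
    proof -
      obtain a b c where abc: "(a, b, c) \<noteq> (0, 0, 0)" and lin: "a *\<^sub>R \<tau> t + b *\<^sub>R d\<tau> t + c *\<^sub>R lam = 0"
        using dep t sub by blast
      have dd: "d\<tau> t \<bullet> d\<tau> t = k^2" using nk[OF t] by (simp add: power2_norm_eq_inner[symmetric])
      have o1: "d\<tau> t \<bullet> \<tau> t = 0" using orth[OF t] by (simp add: inner_commute)
      have i1: "a + c * (\<tau> t \<bullet> lam) = 0"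
      proof -
        have "\<tau> t \<bullet> (a *\<^sub>R \<tau> t + b *\<^sub>R d\<tau> t + c *\<^sub>R lam) = 0" using lin by simp
        thus ?thesis using tt1[OF t] orth[OF t] by (simp add: inner_add_right)
      qed
      have i2: "b * k^2 + c * (d\<tau> t \<bullet> lam) = 0"
      proof -
        have "d\<tau> t \<bullet> (a *\<^sub>R \<tau> t + b *\<^sub>R d\<tau> t + c *\<^sub>R lam) = 0" using lin by simp
        thus ?thesis using dd o1 by (simp add: inner_add_right)
      qed
      have c0: "c \<noteq> 0"
      proof
        assume "c = 0"
        hence "a = 0" "b = 0" using i1 i2 k_pos by auto
        thus False using abc \<open>c = 0\<close> by simp
      qed
      have cl: "c *\<^sub>R lam = - (a *\<^sub>R \<tau> t + b *\<^sub>R d\<tau> t)" using lin by (metis add.commute eq_neg_iff_add_eq_0)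
      have "lam = (1 / c) *\<^sub>R (c *\<^sub>R lam)" using c0 by simp
      also have "\<dots> = (1 / c) *\<^sub>R (- (a *\<^sub>R \<tau> t + b *\<^sub>R d\<tau> t))" by (simp only: cl)
      also have "\<dots> = (- a / c) *\<^sub>R \<tau> t + (- b / c) *\<^sub>R d\<tau> t" by (simp add: scaleR_add_right scaleR_diff_right)
      finally have hL: "lam = (- a / c) *\<^sub>R \<tau> t + (- b / c) *\<^sub>R d\<tau> t" .
      have hA: "- a / c = lam \<bullet> \<tau> t" using i1 c0 by (simp add: field_simps inner_commute)
      have hB: "- b / c = (lam \<bullet> d\<tau> t) / k^2" using i2 c0 k_pos by (simp add: field_simps inner_commute)
      show ?thesis unfolding hA[symmetric] hB[symmetric] by (rule hL)
    qed
    have "\<exists>e \<phi>. e \<bullet> e = 1 \<and> e \<bullet> lam = 0 \<and>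
           (\<forall>t\<in>{t1<..<t2}. \<tau> t = cos (k * t + \<phi>) *\<^sub>R lam + sin (k * t + \<phi>) *\<^sub>R e)"
    proof (rule core[OF t12])
      show "continuous_on {t1<..<t2} d\<tau>" using contI by (simp add: I_def)
    qed (use dif tt1 nk orth spn k_pos lamlam in \<open>auto simp: I_def power2_norm_eq_inner[symmetric]\<close>)
    hence "\<exists>e \<phi>. norm e = 1 \<and> e \<bullet> lam = 0 \<and>
           (\<forall>t\<in>I. \<tau> t = cos (k * t + \<phi>) *\<^sub>R lam + sin (k * t + \<phi>) *\<^sub>R e)"
      by (simp add: norm_eq_1 I_def)
    thus ?thesis using dif orth nk by blast
  qed
  have part1: "\<exists>e \<phi>. norm e = 1 \<and> e \<bullet> lam = 0 \<and>
               (\<forall>t\<in>I. \<tau> t = cos (k * t + \<phi>) *\<^sub>R lam + sin (k * t + \<phi>) *\<^sub>R e)" if sub: "I \<subseteq> \<Omega>"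
  proof (cases "t1 < t2")
    case True thus ?thesis using mainfacts[OF sub] by blast
  next
    case False
    hence Ie: "I = {}" by (auto simp: I_def)
    have "2 \<le> DIM(real ^ 'n)" using n2 by simp
    then obtain y :: "real ^ 'n" where y: "y \<noteq> 0" "orthogonal lam y"
      using orthogonal_to_vector_exists by blast
    show ?thesis
    proof (intro exI conjI)
      show "norm (y /\<^sub>R norm y) = 1" using y by simp
      show "(y /\<^sub>R norm y) \<bullet> lam = 0" using y by (simp add: orthogonal_def inner_commute)
      show "\<forall>t\<in>I. \<tau> t = cos (k * t + 0) *\<^sub>R lam + sin (k * t + 0) *\<^sub>R (y /\<^sub>R norm y)" using Ie by simp
    qed
  qed
  have part2: "\<exists>t0\<in>I. \<tau> t0 = lam \<or> \<tau> t0 = - lam" if comp: "I \<in> components \<Omega>"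
  proof (rule ccontr)
    assume nt: "\<not> (\<exists>t0\<in>I. \<tau> t0 = lam \<or> \<tau> t0 = - lam)"
    have sub: "I \<subseteq> \<Omega>" using comp by (rule in_components_subset)
    have "I \<noteq> {}" using comp by (rule in_components_nonempty)
    hence t12: "t1 < t2" by (simp add: I_def)
    have t1L: "0 \<le> t1" "t2 \<le> L" and I0L: "I \<subseteq> {0<..<L}" using bnds[OF sub t12] by auto
    from mainfacts[OF sub t12] have dif: "\<And>t. t \<in> I \<Longrightarrow> (\<tau> has_vector_derivative d\<tau> t) (at t)"
      and orth: "\<And>t. t \<in> I \<Longrightarrow> \<tau> t \<bullet> d\<tau> t = 0" by auto
    from mainfacts[OF sub t12] obtain e \<phi> where e1: "norm e = 1" and elam: "e \<bullet> lam = 0"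
      and form: "\<And>t. t \<in> I \<Longrightarrow> \<tau> t = cos (k * t + \<phi>) *\<^sub>R lam + sin (k * t + \<phi>) *\<^sub>R e" by blast
    have max: "\<And>D. D \<noteq> {} \<Longrightarrow> I \<subseteq> D \<Longrightarrow> D \<subseteq> \<Omega> \<Longrightarrow> connected D \<Longrightarrow> D = I"
      using comp unfolding in_components_maximal by blast
    have t1O: "t1 \<notin> \<Omega>"
    proof
      assume t1O: "t1 \<in> \<Omega>"
      have "{t1..<t2} \<subseteq> \<Omega>"
      proof
        fix x assume x: "x \<in> {t1..<t2}"
        show "x \<in> \<Omega>"
        proof (cases "x = t1")
          case True thus ?thesis using t1O by simp
        next
          case False thus ?thesis using x sub by (auto simp: I_def)
        qed
      qed
      hence "{t1..<t2} = I" using t12 by (intro max) (auto simp: I_def)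
      thus False using t12 by (auto simp: I_def set_eq_iff)
    qed
    have t2O: "t2 \<notin> \<Omega>"
    proof
      assume t2O: "t2 \<in> \<Omega>"
      have "{t1<..t2} \<subseteq> \<Omega>"
      proof
        fix x assume x: "x \<in> {t1<..t2}"
        show "x \<in> \<Omega>"
        proof (cases "x = t2")
          case True thus ?thesis using t2O by simp
        next
          case False thus ?thesis using x sub by (auto simp: I_def)
        qed
      qed
      hence "{t1<..t2} = I" using t12 by (intro max) (auto simp: I_def)
      thus False using t12 by (auto simp: I_def set_eq_iff)
    qed
    have ut1: "u t1 = 0" using t1O t1L t12 k_pos by (auto simp: \<Omega>_def zero_less_mult_iff)
    have ut2: "u t2 = 0" using t2O t1L t12 k_pos by (auto simp: \<Omega>_def zero_less_mult_iff)
    have sin0: "sin (k * t + \<phi>) \<noteq> 0" if t: "t \<in> I" for t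
    proof
      assume s0: "sin (k * t + \<phi>) = 0"
      hence "(cos (k * t + \<phi>))^2 = 1" using sin_cos_squared_add[of "k * t + \<phi>"] by simp
      hence "cos (k * t + \<phi>) = 1 \<or> cos (k * t + \<phi>) = -1" by (simp add: power2_eq_1_iff)
      thus False using form[OF t] s0 nt t by auto
    qed
    have ldt: "lam \<bullet> d\<tau> t = - k * sin (k * t + \<phi>)" if t: "t \<in> I" for t
    proof -
      have "((\<lambda>t. cos (k * t + \<phi>) *\<^sub>R lam + sin (k * t + \<phi>) *\<^sub>R e) has_vector_derivative
               ((- sin (k * t + \<phi>) * k) *\<^sub>R lam + (cos (k * t + \<phi>) * k) *\<^sub>R e)) (at t)"
        by (auto intro!: derivative_eq_intros simp: has_real_derivative_iff_has_vector_derivative[symmetric])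
      hence "(\<tau> has_vector_derivative ((- sin (k * t + \<phi>) * k) *\<^sub>R lam + (cos (k * t + \<phi>) * k) *\<^sub>R e)) (at t)"
        by (rule has_vector_derivative_transform_within_open[OF _ oI t]) (simp add: form)
      hence "d\<tau> t = (- sin (k * t + \<phi>) * k) *\<^sub>R lam + (cos (k * t + \<phi>) * k) *\<^sub>R e"
        using dif[OF t] vector_derivative_unique_at by blast
      thus ?thesis using lamlam elam by (simp add: inner_add_right inner_diff_right inner_commute)
    qed
    have dnu: "((\<lambda>t. norm (u t)) has_real_derivative (- \<beta> t * sin (k * t + \<phi>))) (at t)"
      if t: "t \<in> I - N0" for t
    proof -
      have tI: "t \<in> I" and t0L: "t \<in> {0<..<L}" using t I0L by auto
      have Nt: "(u has_vector_derivative du t) (at t)"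
        "du t + (u t \<bullet> d\<tau> t) *\<^sub>R \<tau> t = \<beta> t *\<^sub>R (lam - (lam \<bullet> \<tau> t) *\<^sub>R \<tau> t)"
        "norm (u t) *\<^sub>R d\<tau> t = k *\<^sub>R u t" using N0[of t] t t0L by auto
      have u0: "u t \<noteq> 0" using uOm tI sub by auto
      have "((\<lambda>t. norm (u t)) has_derivative (\<lambda>x. x * (du t \<bullet> sgn (u t)))) (at t)"
        using has_derivative_compose[OF Nt(1)[unfolded has_vector_derivative_def] has_derivative_norm[OF u0]]
        by (simp add: o_def)
      hence D1: "((\<lambda>t. norm (u t)) has_real_derivative (sgn (u t) \<bullet> du t)) (at t)"
        unfolding has_field_derivative_def
        by (rule has_derivative_eq_rhs) (auto simp: fun_eq_iff mult.commute inner_commute)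
      have sg: "sgn (u t) = (1 / k) *\<^sub>R d\<tau> t"
      proof -
        have "u t = (norm (u t) / k) *\<^sub>R d\<tau> t" using Nt(3) k_pos
          by (metis (no_types, lifting) divide_inverse_commute scaleR_scaleR inverse_eq_divide less_irrefl mult_cancel_left1 nonzero_mult_div_cancel_left right_inverse scaleR_one)
        hence ueq: "u t = (norm (u t) / k) *\<^sub>R d\<tau> t" .
        have "sgn (u t) = (1 / norm (u t)) *\<^sub>R u t" by (simp add: sgn_div_norm divide_inverse)
        also have "\<dots> = (1 / norm (u t)) *\<^sub>R ((norm (u t) / k) *\<^sub>R d\<tau> t)" by (rule arg_cong[OF ueq])
        also have "\<dots> = (1 / k) *\<^sub>R d\<tau> t" using u0 by simp
        finally show ?thesis .
      qed
      have du: "du t = \<beta> t *\<^sub>R (lam - (lam \<bullet> \<tau> t) *\<^sub>R \<tau> t) - (u t \<bullet> d\<tau> t) *\<^sub>R \<tau> t"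
        using Nt(2) by (simp add: algebra_simps)
      have o1: "d\<tau> t \<bullet> \<tau> t = 0" using orth[OF tI] by (simp add: inner_commute)
      have "sgn (u t) \<bullet> du t = (1 / k) * (\<beta> t * (d\<tau> t \<bullet> lam))"
        unfolding sg du using o1 by (simp add: inner_diff_right inner_add_right)
      also have "\<dots> = - \<beta> t * sin (k * t + \<phi>)" using ldt[OF tI] k_pos by (simp add: inner_commute)
      finally show ?thesis using D1 by simp
    qed
    have tmI: "(t1 + t2) / 2 \<in> I" using t12 by (simp add: I_def)
    define tm where "tm = (t1 + t2) / 2"
    have tm: "tm \<in> I" "t1 < tm" "tm < t2" using tmI t12 by (auto simp: tm_def I_def)
    have utm: "norm (u tm) > 0" using uOm[of tm] tm sub by auto
    have bpos: "\<beta> t > 0" if "t \<in> I" for t using \<beta>_pos that I0L by auto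
    have Cn: "Cu-lipschitz_on {0..L} (\<lambda>t. norm (u t))" by (rule lipschitz_norm_comp[OF Cu])
    have csin: "continuous_on {a..b} (\<lambda>t. sin (k * t + \<phi>))" for a b by (intro continuous_intros)
    have sgnconst: "(\<forall>t\<in>I. sin (k * t + \<phi>) > 0) \<or> (\<forall>t\<in>I. sin (k * t + \<phi>) < 0)"
    proof (rule ccontr)
      assume "\<not> ?thesis"
      then obtain x y where x: "x \<in> I" "sin (k * x + \<phi>) \<le> 0" and y: "y \<in> I" "sin (k * y + \<phi>) \<ge> 0"
        by (auto simp: not_less)
      have "\<exists>z. min x y \<le> z \<and> z \<le> max x y \<and> sin (k * z + \<phi>) = 0"
      proof (cases "x \<le> y")
        case True thus ?thesis using IVT'[of "\<lambda>t. sin (k * t + \<phi>)" x 0 y, OF x(2) y(2) True csin] by auto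
      next
        case False hence yx: "y \<le> x" by simp
        thus ?thesis using IVT2'[of "\<lambda>t. sin (k * t + \<phi>)" x 0 y, OF x(2) y(2) yx csin] by auto
      qed
      then obtain z where z: "min x y \<le> z" "z \<le> max x y" "sin (k * z + \<phi>) = 0" by blast
      have "z \<in> I" using z x y by (auto simp: I_def)
      thus False using sin0 z(3) by blast
    qed
    thus False
    proof
      assume pos: "\<forall>t\<in>I. sin (k * t + \<phi>) > 0"
      have "norm (u tm) - norm (u t1) \<le> 0 * (tm - t1)"
      proof (rule lip_mvt[OF _ _ negN0])
        show "t1 \<le> tm" using tm by simp
        show "Cu-lipschitz_on {t1..tm} (\<lambda>t. norm (u t))" by (rule lipschitz_on_subset[OF Cn]) (use t1L tm in auto)
        fix t assume t: "t \<in> {t1<..<tm} - N0"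
        hence tI: "t \<in> I - N0" using tm by (auto simp: I_def)
        show "\<exists>d. ((\<lambda>t. norm (u t)) has_real_derivative d) (at t) \<and> d \<le> 0"
        proof (intro exI conjI)
          show "((\<lambda>t. norm (u t)) has_real_derivative - \<beta> t * sin (k * t + \<phi>)) (at t)" by (rule dnu[OF tI])
          have "sin (k * t + \<phi>) > 0" using pos tI by blast
          moreover have "\<beta> t > 0" using bpos tI by blast
          ultimately have "\<beta> t * sin (k * t + \<phi>) > 0" by simp
          thus "- \<beta> t * sin (k * t + \<phi>) \<le> 0" by simp
        qed
      qed
      thus False using utm ut1 by simp
    next
      assume neg: "\<forall>t\<in>I. sin (k * t + \<phi>) < 0"
      have "(\<lambda>t. - norm (u t)) t2 - (\<lambda>t. - norm (u t)) tm \<le> 0 * (t2 - tm)"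
      proof (rule lip_mvt[OF _ _ negN0, where g = "\<lambda>t. - norm (u t)"])
        show "tm \<le> t2" using tm by simp
        show "(1 * Cu)-lipschitz_on {tm..t2} (\<lambda>t. - norm (u t))"
          using lipschitz_on_cmult_real[OF lipschitz_on_subset[OF Cn], of "{tm..t2}" "-1"] t1L tm by auto
        fix t assume t: "t \<in> {tm<..<t2} - N0"
        hence tI: "t \<in> I - N0" using tm by (auto simp: I_def)
        have "((\<lambda>t. - norm (u t)) has_real_derivative - (- \<beta> t * sin (k * t + \<phi>))) (at t)"
          by (rule DERIV_minus[OF dnu[OF tI]])
        moreover have "- (- \<beta> t * sin (k * t + \<phi>)) \<le> 0"
        proof -
          have "sin (k * t + \<phi>) < 0" using neg tI by blast
          moreover have "\<beta> t > 0" using bpos tI by blast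
          ultimately have "\<beta> t * sin (k * t + \<phi>) < 0" by (rule mult_pos_neg[rotated])
          thus ?thesis by simp
        qed
        ultimately show "\<exists>d. ((\<lambda>t. - norm (u t)) has_real_derivative d) (at t) \<and> d \<le> 0" by blast
      qed
      thus False using utm ut2 by simp
    qed
  qed
  show ?thesis using part1 part2 by (simp add: I_def)
qed

end
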